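(* Let $p\colon G(J)\to D'(K)$ be a realizable puzzle. Suppose an edge of $G(J)$ colored $v$, with endpoints $\boldsymbol\alpha,\boldsymbol\alpha'$ where $\alpha_v=a$, $\alpha'_v=b$ ($a\ne b$) and $\alpha_i=\alpha'_i$ for $i\ne v$, is trivial, i.e. $p(\boldsymbol\alpha)=p(\boldsymbol\alpha')$. Then every edge parallel to it is trivial: for every $\boldsymbol\beta\in I(J)$ with $\beta_v=a$, letting $\boldsymbol\beta'$ be obtained from $\boldsymbol\beta$ by replacing the $v$-th coordinate by $b$, we have $p(\boldsymbol\beta)=p(\boldsymbol\beta')$.
   Context: Let $R\in\{\mathbb Z,\mathbb Z_2\}$; an $R$-basis of $R^n$ is a $\mathbb Z$-basis of $\mathbb Z^n$ ($R=\mathbb Z$) or a basis of $\mathbb Z_2^n$ ($R=\mathbb Z_2$). $K$ is an $(n-1)$-dimensional star-shaped simplicial sphere on $[m]$. An $R$-characteristic map over a complex with $(N-1)$-dimensional facets is a map from its vertices to $R^N$ sending each $(N-1)$-face to an $R$-basis; D-J equivalence is equality up to left multiplication by $GL_N(R)$. For a face $\sigma$, $\operatorname{proj}_\sigma\lambda$ is the characteristic map on $\operatorname{link}\sigma$ given by $w\mapsto[\lambda(w)]\in R^N/\langle\lambda(u):u\in\sigma\rangle$. For $J=(j_1,\dots,j_m)\in\mathbb Z_{>0}^m$, $K(J)$ is the complex on vertices $\{i_k:1\le i\le m,1\le k\le j_i\}$ whose minimal non-faces are $\bigcup_{i\in\tau}\{i_1,\dots,i_{j_i}\}$ for $\tau$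 a minimal non-face of $K$; $\operatorname{wed}_vK=K(J)$ with $j_v=2$, other $j_i=1$. $I(J)=\{\boldsymbol\alpha:1\le\alpha_i\le j_i\}$; $\sigma(\boldsymbol\alpha)$ is the set of all vertices of $K(J)$ except $1_{\alpha_1},\dots,m_{\alpha_m}$, a face whose link is identified with $K$ via $i_{\alpha_i}\mapsto i$. The pre-diagram $D'(K)$: vertices are D-J classes of $R$-characteristic maps over $K$; an edge colored $v$ joins $\lambda_1,\lambda_2$ iff some $R$-characteristic map $\Lambda$ over $\operatorname{wed}_vK$ has $\operatorname{proj}_{v_1}\Lambda=\lambda_1$, $\operatorname{proj}_{v_2}\Lambda=\lambda_2$ (links of $v_1,v_2$ identified with $K$ by sending the other of $v_1,v_2$ to $v$). $G(J)$ is the $1$-skeleton of $\prod_i\Delta^{j_i-1}$ with vertex set $I(J)$, edges joining vertices differing in exactly one coordinate $v$, colored $v$. A puzzle is a color-preserving graph homomorphism $G(J)\to D'(K)$; it is realizable if it equals $\boldsymbol\alpha\mapsto\operatorname{proj}_{\sigma(\boldsymbol\alpha)}\Lambda$ for some $R$-characteristic map $\Lambda$ over $K(J)$. *)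

theory Defs
  imports "HOL-Analysis.Analysis"
begin

definition ring_Z_or_Z2 :: "'r::comm_ring_1 itself \<Rightarrow> bool" where
  "ring_Z_or_Z2 _ \<longleftrightarrow> bij (of_int :: int \<Rightarrow> 'r) \<or> CARD('r) = 2"

(* vectors of R^N are functions nat => R; only coordinates 0..<N are relevant *)
definition lincomb :: "'v set \<Rightarrow> ('v \<Rightarrow> 'r::comm_ring_1) \<Rightarrow> ('v \<Rightarrow> nat \<Rightarrow> 'r) \<Rightarrow> nat \<Rightarrow> 'r" where
  "lincomb S c f = (\<lambda>k. \<Sum>v\<in>S. c v * f v k)"

definition is_R_basis :: "nat \<Rightarrow> 'v set \<Rightarrow> ('v \<Rightarrow> nat \<Rightarrow> 'r::comm_ring_1) \<Rightarrow> bool" where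
  "is_R_basis N S f \<longleftrightarrow>
     (\<forall>c. (\<forall>k<N. lincomb S c f k = 0) \<longrightarrow> (\<forall>v\<in>S. c v = 0)) \<and>
     (\<forall>y. \<exists>c. \<forall>k<N. lincomb S c f k = y k)"

definition char_map :: "nat \<Rightarrow> 'v set set \<Rightarrow> ('v \<Rightarrow> nat \<Rightarrow> 'r::comm_ring_1) \<Rightarrow> bool" where
  "char_map N L f \<longleftrightarrow> (\<forall>\<sigma>\<in>L. card \<sigma> = N \<longrightarrow> is_R_basis N \<sigma> f)"

definition matvec :: "nat \<Rightarrow> (nat \<Rightarrow> nat \<Rightarrow> 'r::comm_ring_1) \<Rightarrow> (nat \<Rightarrow> 'r) \<Rightarrow> nat \<Rightarrow> 'r" where
  "matvec N A x = (\<lambda>k. \<Sum>l<N. A k l * x l)"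

definition DJ_equiv :: "nat \<Rightarrow> 'v set \<Rightarrow> ('v \<Rightarrow> nat \<Rightarrow> 'r::comm_ring_1) \<Rightarrow> ('v \<Rightarrow> nat \<Rightarrow> 'r) \<Rightarrow> bool" where
  "DJ_equiv N V f g \<longleftrightarrow>
     (\<exists>A B. (\<forall>k<N. \<forall>l<N. (\<Sum>i<N. A k i * B i l) = (if k = l then 1 else 0)) \<and>
            (\<forall>k<N. \<forall>l<N. (\<Sum>i<N. B k i * A i l) = (if k = l then 1 else 0)) \<and>
            (\<forall>v\<in>V. \<forall>k<N. g v k = matvec N A (f v) k))"

(* mu (a map on vertex set V, valued in R^N') is D-J equivalent to proj_sigma Lam,
   where the link of sigma is identified with V via psi : V -> link sigma.
   The quotient R^N / <Lam u : u in sigma> is identified with R^N' by a surjective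
   R-linear map P : R^N -> R^N' whose kernel is exactly that span. *)
definition proj_rep :: "nat \<Rightarrow> ('w \<Rightarrow> nat \<Rightarrow> 'r::comm_ring_1) \<Rightarrow> 'w set \<Rightarrow> nat \<Rightarrow> ('v \<Rightarrow> 'w) \<Rightarrow> 'v set
     \<Rightarrow> ('v \<Rightarrow> nat \<Rightarrow> 'r) \<Rightarrow> bool" where
  "proj_rep N Lam \<sigma> N' \<psi> V \<mu> \<longleftrightarrow>
     (\<exists>P. (\<forall>y. \<exists>x. \<forall>k<N'. matvec N P x k = y k) \<and>
          (\<forall>x. (\<forall>k<N'. matvec N P x k = 0) \<longleftrightarrow> (\<exists>c. \<forall>l<N. x l = (\<Sum>u\<in>\<sigma>. c u * Lam u l))) \<and>
          (\<forall>i\<in>V. \<forall>k<N'. \<mu> i k = matvec N P (Lam (\<psi> i)) k))"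

definition simplicial_complex_on :: "nat \<Rightarrow> nat set set \<Rightarrow> bool" where
  "simplicial_complex_on m K \<longleftrightarrow> K \<subseteq> Pow {1..m} \<and> (\<forall>\<sigma>\<in>K. \<forall>\<tau>. \<tau> \<subseteq> \<sigma> \<longrightarrow> \<tau> \<in> K)
      \<and> (\<forall>i\<in>{1..m}. {i} \<in> K)"

definition geom_realization :: "nat set set \<Rightarrow> (nat \<Rightarrow> 'a::euclidean_space) \<Rightarrow> bool" where
  "geom_realization K pos \<longleftrightarrow>
     (\<forall>\<sigma>\<in>K. inj_on pos \<sigma> \<and> \<not> affine_dependent (pos ` \<sigma>)) \<and>
     (\<forall>\<sigma>\<in>K. \<forall>\<tau>\<in>K. convex hull (pos ` \<sigma>) \<inter> convex hull (pos ` \<tau>) = convex hull (pos ` (\<sigma> \<inter> \<tau>)))"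

definition polyhedron :: "nat set set \<Rightarrow> (nat \<Rightarrow> 'a::euclidean_space) \<Rightarrow> 'a set" where
  "polyhedron K pos = (\<Union>\<sigma>\<in>K. convex hull (pos ` \<sigma>))"

(* (n-1)-dimensional star-shaped simplicial sphere on [m], realized in a Euclidean
   space 'a of dimension n: every ray from some point x0 meets |K| exactly once *)
definition star_shaped_sphere :: "'a::euclidean_space itself \<Rightarrow> nat \<Rightarrow> nat \<Rightarrow> nat set set \<Rightarrow> bool" where
  "star_shaped_sphere _ n m K \<longleftrightarrow>
     simplicial_complex_on m K \<and> (\<forall>\<sigma>\<in>K. card \<sigma> \<le> n) \<and> (\<exists>\<sigma>\<in>K. card \<sigma> = n) \<and>
     DIM('a) = n \<and>
     (\<exists>pos :: nat \<Rightarrow> 'a. geom_realization K pos \<and>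
        (\<exists>x0. \<forall>u. u \<noteq> 0 \<longrightarrow> (\<exists>!t::real. t \<ge> 0 \<and> x0 + t *\<^sub>R u \<in> polyhedron K pos)))"

(* vertex i_k of K(J) is the pair (i,k) *)
definition blk :: "(nat \<Rightarrow> nat) \<Rightarrow> nat \<Rightarrow> (nat \<times> nat) set" where
  "blk J i = {(i, k) | k. 1 \<le> k \<and> k \<le> J i}"

definition VJ :: "nat \<Rightarrow> (nat \<Rightarrow> nat) \<Rightarrow> (nat \<times> nat) set" where
  "VJ m J = (\<Union>i\<in>{1..m}. blk J i)"

definition min_nonface :: "nat \<Rightarrow> nat set set \<Rightarrow> nat set \<Rightarrow> bool" where
  "min_nonface m K \<tau> \<longleftrightarrow> \<tau> \<subseteq> {1..m} \<and> \<tau> \<notin> K \<and> (\<forall>\<rho>. \<rho> \<subset> \<tau> \<longrightarrow> \<rho> \<in> K)"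

definition KJ :: "nat \<Rightarrow> nat set set \<Rightarrow> (nat \<Rightarrow> nat) \<Rightarrow> (nat \<times> nat) set set" where
  "KJ m K J = {S. S \<subseteq> VJ m J \<and> \<not> (\<exists>\<tau>. min_nonface m K \<tau> \<and> (\<Union>i\<in>\<tau>. blk J i) \<subseteq> S)}"

definition wedJ :: "nat \<Rightarrow> nat \<Rightarrow> nat" where
  "wedJ v = (\<lambda>i. if i = v then 2 else 1)"

(* dimension N of characteristic maps over K(J) *)
definition NJ :: "nat \<Rightarrow> nat \<Rightarrow> (nat \<Rightarrow> nat) \<Rightarrow> nat" where
  "NJ n m J = n + (\<Sum>i\<in>{1..m}. J i - 1)"

definition IJ :: "nat \<Rightarrow> (nat \<Rightarrow> nat) \<Rightarrow> (nat \<Rightarrow> nat) set" where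
  "IJ m J = {\<alpha>. (\<forall>i\<in>{1..m}. 1 \<le> \<alpha> i \<and> \<alpha> i \<le> J i) \<and> (\<forall>i. i \<notin> {1..m} \<longrightarrow> \<alpha> i = 0)}"

definition sigmaJ :: "nat \<Rightarrow> (nat \<Rightarrow> nat) \<Rightarrow> (nat \<Rightarrow> nat) \<Rightarrow> (nat \<times> nat) set" where
  "sigmaJ m J \<alpha> = VJ m J - {(i, \<alpha> i) | i. i \<in> {1..m}}"

definition Dedge :: "nat \<Rightarrow> nat \<Rightarrow> nat set set \<Rightarrow> nat \<Rightarrow> (nat \<Rightarrow> nat \<Rightarrow> 'r::comm_ring_1)
     \<Rightarrow> (nat \<Rightarrow> nat \<Rightarrow> 'r) \<Rightarrow> bool" where
  "Dedge n m K v f1 f2 \<longleftrightarrow>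
     (\<exists>Lam :: nat \<times> nat \<Rightarrow> nat \<Rightarrow> 'r. char_map (n + 1) (KJ m K (wedJ v)) Lam \<and>
        proj_rep (n + 1) Lam {(v, 1)} n (\<lambda>i. if i = v then (v, 2) else (i, 1)) {1..m} f1 \<and>
        proj_rep (n + 1) Lam {(v, 2)} n (\<lambda>i. (i, 1)) {1..m} f2)"

(* a puzzle G(J) -> D'(K), given by representatives p alpha of D-J classes *)
definition puzzle :: "nat \<Rightarrow> nat \<Rightarrow> nat set set \<Rightarrow> (nat \<Rightarrow> nat) \<Rightarrow> ((nat \<Rightarrow> nat) \<Rightarrow> nat \<Rightarrow> nat \<Rightarrow> 'r::comm_ring_1) \<Rightarrow> bool" where
  "puzzle n m K J p \<longleftrightarrow>
     (\<forall>\<alpha>\<in>IJ m J. char_map n K (p \<alpha>)) \<and>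
     (\<forall>\<alpha>\<in>IJ m J. \<forall>v\<in>{1..m}. \<forall>c. 1 \<le> c \<and> c \<le> J v \<and> c \<noteq> \<alpha> v \<longrightarrow>
         Dedge n m K v (p \<alpha>) (p (\<alpha>(v := c))))"

definition realizable_puzzle :: "nat \<Rightarrow> nat \<Rightarrow> nat set set \<Rightarrow> (nat \<Rightarrow> nat) \<Rightarrow> ((nat \<Rightarrow> nat) \<Rightarrow> nat \<Rightarrow> nat \<Rightarrow> 'r::comm_ring_1) \<Rightarrow> bool" where
  "realizable_puzzle n m K J p \<longleftrightarrow> puzzle n m K J p \<and>
     (\<exists>Lam :: nat \<times> nat \<Rightarrow> nat \<Rightarrow> 'r. char_map (NJ n m J) (KJ m K J) Lam \<and>
        (\<forall>\<alpha>\<in>IJ m J. proj_rep (NJ n m J) Lam (sigmaJ m J \<alpha>) n (\<lambda>i. (i, \<alpha> i)) {1..m} (p \<alpha>)))"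

end

theory Submission
  imports Defs
begin


definition lin :: "((nat \<Rightarrow> 'r::comm_ring_1) \<Rightarrow> nat \<Rightarrow> 'r) \<Rightarrow> bool" where
  "lin f \<longleftrightarrow> (\<forall>x y. f (\<lambda>l. x l + y l) = (\<lambda>k. f x k + f y k)) \<and> (\<forall>c x. f (\<lambda>l. c * x l) = (\<lambda>k. c * f x k))"

definition slin :: "((nat \<Rightarrow> 'r::comm_ring_1) \<Rightarrow> 'r) \<Rightarrow> bool" where
  "slin f \<longleftrightarrow> (\<forall>x y. f (\<lambda>l. x l + y l) = f x + f y) \<and> (\<forall>c x. f (\<lambda>l. c * x l) = c * f x)"

definition spn :: "nat \<Rightarrow> ('w \<Rightarrow> nat \<Rightarrow> 'r::comm_ring_1) \<Rightarrow> 'w set \<Rightarrow> (nat \<Rightarrow> 'r) \<Rightarrow> bool" where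
  "spn N Lam S x \<longleftrightarrow> (\<exists>c. \<forall>l<N. x l = (\<Sum>u\<in>S. c u * Lam u l))"

lemma lin_add: "lin f \<Longrightarrow> f (\<lambda>l. x l + y l) = (\<lambda>k. f x k + f y k)" unfolding lin_def by blast
lemma lin_mul: "lin f \<Longrightarrow> f (\<lambda>l. c * x l) = (\<lambda>k. c * f x k)" unfolding lin_def by blast
lemma lin_zero: assumes "lin f" shows "f (\<lambda>l. 0) = (\<lambda>k. 0)"
  using lin_mul[OF assms, of 0 "\<lambda>l. 0"] by simp
lemma lin_diff: assumes "lin f" shows "f (\<lambda>l. x l - y l) = (\<lambda>k. f x k - f y k)"
proof -
  have "f (\<lambda>l. x l - y l) = f (\<lambda>l. x l + (\<lambda>l. (-1) * y l) l)" by simp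
  also have "\<dots> = (\<lambda>k. f x k + f (\<lambda>l. (-1) * y l) k)" by (rule lin_add[OF assms])
  also have "\<dots> = (\<lambda>k. f x k + (-1) * f y k)" by (simp only: lin_mul[OF assms])
  finally show ?thesis by simp
qed
lemma lin_sum: assumes "lin f" "finite S"
  shows "f (\<lambda>l. \<Sum>i\<in>S. c i * xs i l) = (\<lambda>k. \<Sum>i\<in>S. c i * f (xs i) k)"
  using assms(2)
proof (induction S rule: finite_induct)
  case empty then show ?case using lin_zero[OF assms(1)] by simp
next
  case (insert a S)
  have "f (\<lambda>l. \<Sum>i\<in>insert a S. c i * xs i l) = f (\<lambda>l. (\<lambda>l. c a * xs a l) l + (\<lambda>l. \<Sum>i\<in>S. c i * xs i l) l)"
    using insert by simp
  also have "\<dots> = (\<lambda>k. \<Sum>i\<in>insert a S. c i * f (xs i) k)"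
    using insert by (simp add: lin_add[OF assms(1)] lin_mul[OF assms(1)])
  finally show ?case .
qed

lemma slin_add: "slin f \<Longrightarrow> f (\<lambda>l. x l + y l) = f x + f y" unfolding slin_def by blast
lemma slin_mul: "slin f \<Longrightarrow> f (\<lambda>l. c * x l) = c * f x" unfolding slin_def by blast
lemma slin_zero: assumes "slin f" shows "f (\<lambda>l. 0) = 0"
  using slin_mul[OF assms, of 0 "\<lambda>l. 0"] by simp
lemma slin_neg: assumes "slin f" shows "f (\<lambda>l. - x l) = - f x"
  using slin_mul[OF assms, of "-1" x] by simp
lemma slin_sum: assumes "slin f" "finite S"
  shows "f (\<lambda>l. \<Sum>i\<in>S. c i * xs i l) = (\<Sum>i\<in>S. c i * f (xs i))"
  using assms(2)
proof (induction S rule: finite_induct)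
  case empty then show ?case using slin_zero[OF assms(1)] by simp
next
  case (insert a S)
  have "f (\<lambda>l. \<Sum>i\<in>insert a S. c i * xs i l) = f (\<lambda>l. (\<lambda>l. c a * xs a l) l + (\<lambda>l. \<Sum>i\<in>S. c i * xs i l) l)"
    using insert by simp
  also have "\<dots> = (\<Sum>i\<in>insert a S. c i * f (xs i))"
    using insert by (simp add: slin_add[OF assms(1)] slin_mul[OF assms(1)])
  finally show ?case .
qed

lemma matvec_lin: "lin (matvec N P)"
  unfolding lin_def matvec_def
  by (auto simp: sum.distrib sum_distrib_left algebra_simps intro!: ext)

lemma matvec_loc: "(\<forall>l<N. x l = x' l) \<Longrightarrow> matvec N P x = matvec N P x'"
  unfolding matvec_def by (auto intro!: ext sum.cong)

lemma matvec_loc_n: "(\<forall>l<n. x l = x' l) \<Longrightarrow> k < n' \<Longrightarrow> matvec n P x k = matvec n P x' k"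
  using matvec_loc by metis

lemma coord_expand:
  fixes f g :: "(nat \<Rightarrow> 'r::comm_ring_1) \<Rightarrow> nat \<Rightarrow> 'r"
  assumes lf: "lin f" and lg: "lin g"
    and ker: "\<And>x. (\<forall>k<n. f x k = 0) \<Longrightarrow> (\<forall>k<n. g x k = 0)"
    and xs: "\<And>k j. k < n \<Longrightarrow> j < n \<Longrightarrow> f (xs k) j = (if j = k then 1 else 0)"
    and j: "j < n"
  shows "g x j = (\<Sum>k<n. g (xs k) j * f x k)"
proof -
  define z where "z = (\<lambda>l. x l - (\<Sum>k<n. f x k * xs k l))"
  have fz: "f z = (\<lambda>i. f x i - (\<Sum>k<n. f x k * f (xs k) i))"
    unfolding z_def by (simp add: lin_diff[OF lf] lin_sum[OF lf])
  have "\<forall>i<n. f z i = 0"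
  proof (intro allI impI)
    fix i assume i: "i < n"
    have "(\<Sum>k<n. f x k * f (xs k) i) = (\<Sum>k<n. if k = i then f x k else 0)"
      using i by (intro sum.cong) (auto simp: xs)
    also have "\<dots> = f x i" using i by simp
    finally show "f z i = 0" using fz by simp
  qed
  then have "g z j = 0" using ker j by blast
  moreover have "g z = (\<lambda>i. g x i - (\<Sum>k<n. f x k * g (xs k) i))"
    unfolding z_def by (simp add: lin_diff[OF lg] lin_sum[OF lg])
  ultimately show ?thesis by (simp add: mult.commute)
qed

lemma same_kernel_DJ:
  fixes f g :: "(nat \<Rightarrow> 'r::comm_ring_1) \<Rightarrow> nat \<Rightarrow> 'r"
  assumes lf: "lin f" and lg: "lin g"
    and sf: "\<forall>y. \<exists>x. \<forall>k<n. f x k = y k" and sg: "\<forall>y. \<exists>x. \<forall>k<n. g x k = y k"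
    and ker: "\<And>x. (\<forall>k<n. f x k = 0) \<longleftrightarrow> (\<forall>k<n. g x k = 0)"
  shows "\<exists>A B. (\<forall>k<n. \<forall>l<n. (\<Sum>i<n. A k i * B i l) = (if k = l then 1 else 0)) \<and>
            (\<forall>k<n. \<forall>l<n. (\<Sum>i<n. B k i * A i l) = (if k = l then 1 else 0)) \<and>
            (\<forall>x. \<forall>k<n. g x k = matvec n A (f x) k)"
proof -
  have "\<forall>k. \<exists>x. \<forall>j<n. f x j = (if j = k then 1 else 0)"
  proof
    fix k show "\<exists>x. \<forall>j<n. f x j = (if j = k then 1 else 0)" using sf[rule_format, of "\<lambda>j. if j = k then 1 else 0"] by simp
  qed
  then obtain xs where xs0: "\<forall>k. \<forall>j<n. f (xs k) j = (if j = k then 1 else 0)" by (rule choice[THEN exE]) blast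
  then have xs: "\<And>k j. j < n \<Longrightarrow> f (xs k) j = (if j = k then 1 else 0)" by blast
  have "\<forall>k. \<exists>x. \<forall>j<n. g x j = (if j = k then 1 else 0)"
  proof
    fix k show "\<exists>x. \<forall>j<n. g x j = (if j = k then 1 else 0)" using sg[rule_format, of "\<lambda>j. if j = k then 1 else 0"] by simp
  qed
  then obtain ys where ys0: "\<forall>k. \<forall>j<n. g (ys k) j = (if j = k then 1 else 0)" by (rule choice[THEN exE]) blast
  then have ys: "\<And>k j. j < n \<Longrightarrow> g (ys k) j = (if j = k then 1 else 0)" by blast
  have eg: "\<And>x j. j < n \<Longrightarrow> g x j = (\<Sum>k<n. g (xs k) j * f x k)"
    by (rule coord_expand[OF lf lg]) (use ker xs in blast)+
  have ef: "\<And>x j. j < n \<Longrightarrow> f x j = (\<Sum>k<n. f (ys k) j * g x k)"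
    by (rule coord_expand[OF lg lf]) (use ker ys in blast)+
  define A where "A = (\<lambda>j k. g (xs k) j)"
  define B where "B = (\<lambda>j k. f (ys k) j)"
  show ?thesis
  proof (intro exI conjI allI impI)
    fix k l assume "k < n" "l < n"
    then show "(\<Sum>i<n. A k i * B i l) = (if k = l then 1 else 0)"
      unfolding A_def B_def using eg[of k "ys l"] ys by simp
  next
    fix k l assume "k < n" "l < n"
    then show "(\<Sum>i<n. B k i * A i l) = (if k = l then 1 else 0)"
      unfolding A_def B_def using ef[of k "xs l"] xs by simp
  next
    fix x k assume "k < n"
    then show "g x k = matvec n A (f x) k" unfolding A_def matvec_def using eg[of k x] by (simp add: mult.commute)
  qed
qed

lemma swap_span:
  fixes Lam :: "'w \<Rightarrow> nat \<Rightarrow> 'r::comm_ring_1"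
  assumes fin: "finite S" and t: "t \<in> S" and s: "s \<notin> S" and sl: "slin Psi"
    and loc: "\<And>x x'. (\<forall>l<N. x l = x' l) \<Longrightarrow> Psi x = Psi x'"
    and vs: "Psi (Lam s) = -1" and vt: "Psi (Lam t) = 1" and vo: "\<forall>u\<in>S-{t}. Psi (Lam u) = 0"
    and sp: "spn N Lam S x"
  shows "spn N Lam (insert s (S - {t})) (\<lambda>l. x l + Psi x * (Lam s l - Lam t l))"
proof -
  obtain c where c: "\<forall>l<N. x l = (\<Sum>u\<in>S. c u * Lam u l)" using sp unfolding spn_def by blast
  have "Psi x = Psi (\<lambda>l. \<Sum>u\<in>S. c u * Lam u l)" using c by (intro loc) auto
  also have "\<dots> = (\<Sum>u\<in>S. c u * Psi (Lam u))" by (rule slin_sum[OF sl fin])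
  also have "\<dots> = c t * Psi (Lam t) + (\<Sum>u\<in>S-{t}. c u * Psi (Lam u))"
    using fin t by (simp add: sum.remove)
  also have "\<dots> = c t" using vt vo by simp
  finally have Px: "Psi x = c t" .
  define c' where "c' = c(s := c t)"
  show ?thesis unfolding spn_def
  proof (intro exI[of _ c'] allI impI)
    fix l assume l: "l < N"
    have e1: "(\<Sum>u\<in>S - {t}. c' u * Lam u l) = (\<Sum>u\<in>S - {t}. c u * Lam u l)"
      by (rule sum.cong) (use s in \<open>auto simp: c'_def\<close>)
    have "(\<Sum>u\<in>insert s (S - {t}). c' u * Lam u l) = c' s * Lam s l + (\<Sum>u\<in>S - {t}. c' u * Lam u l)"
      using fin s by simp
    then have "(\<Sum>u\<in>insert s (S - {t}). c' u * Lam u l) = c t * Lam s l + (\<Sum>u\<in>S - {t}. c u * Lam u l)"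
      using e1 by (simp add: c'_def)
    moreover have "(\<Sum>u\<in>S. c u * Lam u l) = c t * Lam t l + (\<Sum>u\<in>S - {t}. c u * Lam u l)"
      using fin t by (simp add: sum.remove)
    ultimately show "x l + Psi x * (Lam s l - Lam t l) = (\<Sum>u\<in>insert s (S - {t}). c' u * Lam u l)"
      using c l Px by (simp add: algebra_simps)
  qed
qed

lemma coord_fun:
  fixes \<mu> :: "nat \<Rightarrow> nat \<Rightarrow> 'r::comm_ring_1"
  assumes b: "is_R_basis n F \<mu>" and fin: "finite F" and v: "v \<in> F"
  shows "\<exists>\<phi>. slin \<phi> \<and> (\<forall>x x'. (\<forall>k<n. x k = x' k) \<longrightarrow> \<phi> x = \<phi> x') \<and> \<phi> (\<mu> v) = 1"
proof -
  have ind: "\<And>c. (\<forall>k<n. lincomb F c \<mu> k = 0) \<Longrightarrow> \<forall>u\<in>F. c u = 0"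
    and sp: "\<And>y. \<exists>c. \<forall>k<n. lincomb F c \<mu> k = y k" using b unfolding is_R_basis_def by blast+
  have uniq: "\<And>c d. (\<forall>k<n. lincomb F c \<mu> k = lincomb F d \<mu> k) \<Longrightarrow> \<forall>u\<in>F. c u = d u"
  proof -
    fix c d assume h: "\<forall>k<n. lincomb F c \<mu> k = lincomb F d \<mu> k"
    have "\<forall>k<n. lincomb F (\<lambda>u. c u - d u) \<mu> k = 0"
      using h unfolding lincomb_def by (simp add: algebra_simps sum_subtractf)
    then show "\<forall>u\<in>F. c u = d u" using ind[of "\<lambda>u. c u - d u"] by simp
  qed
  define co where "co x = (SOME c. \<forall>k<n. lincomb F c \<mu> k = x k)" for x
  have co: "\<And>x. \<forall>k<n. lincomb F (co x) \<mu> k = x k" unfolding co_def by (rule someI_ex[OF sp])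
  define \<phi> where "\<phi> x = co x v" for x
  show ?thesis
  proof (intro exI[of _ \<phi>] conjI allI impI)
    show "slin \<phi>" unfolding slin_def
    proof (intro conjI allI)
      fix x y
      have h: "\<forall>k<n. lincomb F (co (\<lambda>l. x l + y l)) \<mu> k = lincomb F (\<lambda>u. co x u + co y u) \<mu> k"
        using co[of x] co[of y] co[of "\<lambda>l. x l + y l"]
        unfolding lincomb_def by (simp add: algebra_simps sum.distrib)
      show "\<phi> (\<lambda>l. x l + y l) = \<phi> x + \<phi> y" unfolding \<phi>_def using uniq[OF h] v by blast
    next
      fix c x
      have h: "\<forall>k<n. lincomb F (co (\<lambda>l. c * x l)) \<mu> k = lincomb F (\<lambda>u. c * co x u) \<mu> k"
      proof (intro allI impI)
        fix k assume k: "k < n"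
        have "lincomb F (\<lambda>u. c * co x u) \<mu> k = c * lincomb F (co x) \<mu> k"
          unfolding lincomb_def by (simp add: sum_distrib_left mult.assoc)
        then show "lincomb F (co (\<lambda>l. c * x l)) \<mu> k = lincomb F (\<lambda>u. c * co x u) \<mu> k"
          using co[of x] co[of "\<lambda>l. c * x l"] k by simp
      qed
      show "\<phi> (\<lambda>l. c * x l) = c * \<phi> x" unfolding \<phi>_def using uniq[OF h] v by blast
    qed
  next
    fix x x' :: "nat \<Rightarrow> 'r" assume "\<forall>k<n. x k = x' k"
    then have "(\<lambda>c. \<forall>k<n. lincomb F c \<mu> k = x k) = (\<lambda>c. \<forall>k<n. lincomb F c \<mu> k = x' k)" by auto
    then show "\<phi> x = \<phi> x'" unfolding \<phi>_def co_def by simp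
  next
    have h: "\<forall>k<n. lincomb F (co (\<mu> v)) \<mu> k = lincomb F (\<lambda>u. if u = v then 1 else 0) \<mu> k"
    proof (intro allI impI)
      fix k assume "k < n"
      have "lincomb F (\<lambda>u. if u = v then 1 else 0) \<mu> k = \<mu> v k"
        unfolding lincomb_def by (subst sum.remove[OF fin v]) simp
      then show "lincomb F (co (\<mu> v)) \<mu> k = lincomb F (\<lambda>u. if u = v then 1 else 0) \<mu> k"
        using co[of "\<mu> v"] \<open>k < n\<close> by simp
    qed
    show "\<phi> (\<mu> v) = 1" unfolding \<phi>_def using uniq[OF h] v by simp
  qed
qed



lemma lin_comp: "lin f \<Longrightarrow> lin g \<Longrightarrow> lin (\<lambda>x. f (g x))"
  unfolding lin_def by simp

lemma lin_minus: "lin f \<Longrightarrow> lin g \<Longrightarrow> lin (\<lambda>x k. f x k - g x k)"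
  unfolding lin_def by (simp add: algebra_simps)

lemma slin_comp_neg: "slin \<phi> \<Longrightarrow> lin D \<Longrightarrow> slin (\<lambda>x. - \<phi> (D x))"
  unfolding slin_def lin_def by (simp add: algebra_simps)

lemma slin_diff: assumes "slin f" shows "f (\<lambda>l. x l - y l) = f x - f y"
proof -
  have "f (\<lambda>l. x l - y l) = f (\<lambda>l. x l + (\<lambda>l. (-1) * y l) l)" by simp
  also have "\<dots> = f x + f (\<lambda>l. (-1) * y l)" by (rule slin_add[OF assms])
  also have "\<dots> = f x + (-1) * f y" by (simp only: slin_mul[OF assms])
  finally show ?thesis by simp
qed

lemma VJ_mem: "(i,k) \<in> VJ m J \<longleftrightarrow> i \<in> {1..m} \<and> 1 \<le> k \<and> k \<le> J i"
  unfolding VJ_def blk_def by auto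

lemma blk_eq: "blk J i = Pair i ` {1..J i}"
  unfolding blk_def by auto

lemma VJ_fin: "finite (VJ m J)"
  unfolding VJ_def blk_eq by simp

lemma sigma_mem: "(i,k) \<in> sigmaJ m J \<alpha> \<longleftrightarrow> (i,k) \<in> VJ m J \<and> k \<noteq> \<alpha> i"
proof -
  have "(i,k) \<in> {(j, \<alpha> j) | j. j \<in> {1..m}} \<longleftrightarrow> i \<in> {1..m} \<and> k = \<alpha> i" by blast
  then show ?thesis unfolding sigmaJ_def using VJ_mem[of i k m J] by blast
qed

lemma sigma_fin: "finite (sigmaJ m J \<alpha>)"
  unfolding sigmaJ_def using VJ_fin by simp

lemma in_ker:
  assumes "u \<in> S" "finite S"
    and ker: "\<forall>x. (\<forall>k<n. matvec N P x k = 0) \<longleftrightarrow> (\<exists>c. \<forall>l<N. x l = (\<Sum>w\<in>S. c w * Lam w l))"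
  shows "\<forall>k<n. matvec N P (Lam u) k = 0"
proof -
  have "\<forall>l<N. Lam u l = (\<Sum>w\<in>S. (if w = u then 1 else 0) * Lam w l)"
    using assms(1,2) by (simp add: sum.remove[OF assms(2,1)])
  then have "\<exists>c. \<forall>l<N. Lam u l = (\<Sum>w\<in>S. c w * Lam w l)" by (rule exI[where x="\<lambda>w. if w = u then 1 else 0"])
  then show ?thesis using ker[rule_format, of "Lam u"] by simp
qed

lemma make_Psi:
  fixes Lam :: "nat \<times> nat \<Rightarrow> nat \<Rightarrow> 'r::comm_ring_1"
  assumes v: "v \<in> {1..m}" and "\<alpha> v = a" "\<alpha>' v = b" "a \<noteq> b" and eqo: "\<forall>i. i \<noteq> v \<longrightarrow> \<alpha> i = \<alpha>' i"
    and DJ: "\<forall>i\<in>{1..m}. \<forall>k<n. p' i k = matvec n A (p i) k"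
    and kerP: "\<forall>x. (\<forall>k<n. matvec N P x k = 0) \<longleftrightarrow> (\<exists>c. \<forall>l<N. x l = (\<Sum>w\<in>sigmaJ m J \<alpha>. c w * Lam w l))"
    and repP: "\<forall>i\<in>{1..m}. \<forall>k<n. p i k = matvec N P (Lam (i, \<alpha> i)) k"
    and kerP': "\<forall>x. (\<forall>k<n. matvec N P' x k = 0) \<longleftrightarrow> (\<exists>c. \<forall>l<N. x l = (\<Sum>w\<in>sigmaJ m J \<alpha>'. c w * Lam w l))"
    and repP': "\<forall>i\<in>{1..m}. \<forall>k<n. p' i k = matvec N P' (Lam (i, \<alpha>' i)) k"
    and \<phi>: "slin \<phi>" "\<forall>x x'. (\<forall>k<n. x k = x' k) \<longrightarrow> \<phi> x = \<phi> x'" "\<phi> (p' v) = 1"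
  shows "\<exists>Psi. slin Psi \<and> (\<forall>x x'. (\<forall>l<N. x l = x' l) \<longrightarrow> Psi x = Psi x') \<and>
     (\<forall>u\<in>VJ m J. Psi (Lam u) = (if u = (v,a) then -1 else if u = (v,b) then 1 else 0))"
proof -
  define D where "D x = (\<lambda>k. matvec n A (matvec N P x) k - matvec N P' x k)" for x
  have linD: "lin D" unfolding D_def
    by (rule lin_minus[OF lin_comp[OF matvec_lin matvec_lin] matvec_lin])
  define Psi where "Psi x = - \<phi> (D x)" for x
  have Dval: "\<forall>j<n. D (Lam (i,k)) j = (if (i,k) = (v,a) then p' v j else if (i,k) = (v,b) then - p' v j else 0)"
    if u: "(i,k) \<in> VJ m J" for i k
  proof (intro allI impI)
    fix j assume j: "j < n"
    have i: "i \<in> {1..m}" using u VJ_mem by blast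
    have A1: "matvec n A (matvec N P (Lam (i,k))) j = (if k = \<alpha> i then p' i j else 0)"
    proof (cases "k = \<alpha> i")
      case True
      have "matvec n A (matvec N P (Lam (i,k))) j = matvec n A (p i) j"
        using repP i True by (intro matvec_loc_n[OF _ j]) auto
      then show ?thesis using DJ i j True by simp
    next
      case False
      then have "(i,k) \<in> sigmaJ m J \<alpha>" using u sigma_mem by blast
      then have "\<forall>l<n. matvec N P (Lam (i,k)) l = 0" using in_ker[OF _ sigma_fin kerP] by blast
      then show ?thesis using False unfolding matvec_def by simp
    qed
    have A2: "matvec N P' (Lam (i,k)) j = (if k = \<alpha>' i then p' i j else 0)"
    proof (cases "k = \<alpha>' i")
      case True
      then show ?thesis using repP' i j by simp
    next
      case False
      then have "(i,k) \<in> sigmaJ m J \<alpha>'" using u sigma_mem by blast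
      then show ?thesis using in_ker[OF _ sigma_fin kerP'] False j by simp
    qed
    have E: "D (Lam (i,k)) j = (if k = \<alpha> i then p' i j else 0) - (if k = \<alpha>' i then p' i j else 0)"
      unfolding D_def using A1 A2 by simp
    show "D (Lam (i,k)) j = (if (i,k) = (v,a) then p' v j else if (i,k) = (v,b) then - p' v j else 0)"
    proof (cases "i = v")
      case True
      then show ?thesis using E assms(2,3,4) by simp
    next
      case False
      then have "\<alpha> i = \<alpha>' i" using eqo by blast
      then show ?thesis using E False by simp
    qed
  qed
  show ?thesis
  proof (intro exI[of _ Psi] conjI ballI allI impI)
    show "slin Psi" unfolding Psi_def by (rule slin_comp_neg[OF \<phi>(1) linD])
  next
    fix x x' :: "nat \<Rightarrow> 'r" assume "\<forall>l<N. x l = x' l"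
    then have "matvec N P x = matvec N P x'" "matvec N P' x = matvec N P' x'" using matvec_loc by blast+
    then show "Psi x = Psi x'" unfolding Psi_def D_def by simp
  next
    fix u assume u: "u \<in> VJ m J"
    obtain i k where ik: "u = (i,k)" by (cases u) blast
    define z where "z = (\<lambda>j. if (i,k) = (v,a) then p' v j else if (i,k) = (v,b) then - p' v j else 0)"
    have Du: "\<forall>j<n. D (Lam u) j = z j" using Dval[of i k] u ik unfolding z_def by simp
    have "\<phi> (D (Lam u)) = \<phi> z" using \<phi>(2) Du by blast
    then have h1: "Psi (Lam u) = - \<phi> z" unfolding Psi_def by simp
    have h2: "\<phi> (\<lambda>j. - p' v j) = -1" using slin_neg[OF \<phi>(1), of "p' v"] \<phi>(3) by simp
    have h3: "\<phi> (\<lambda>j. 0) = 0" by (rule slin_zero[OF \<phi>(1)])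
    show "Psi (Lam u) = (if u = (v,a) then -1 else if u = (v,b) then 1 else 0)"
    proof -
      have "z = (if u = (v,a) then p' v else if u = (v,b) then (\<lambda>j. - p' v j) else (\<lambda>j. 0))"
        unfolding z_def ik by auto
      then show ?thesis using h1 h2 h3 \<phi>(3) assms(4) by auto
    qed
  qed
qed

lemma lin_T:
  assumes "slin Psi"
  shows "lin (\<lambda>x l. x l + Psi x * (d l))"
  unfolding lin_def using slin_add[OF assms] slin_mul[OF assms] by (simp add: algebra_simps)

lemma dir2:
  fixes Lam :: "nat \<times> nat \<Rightarrow> nat \<Rightarrow> 'r::comm_ring_1"
  assumes v: "v \<in> {1..m}" and \<beta>: "\<beta> \<in> IJ m J" and \<beta>v: "\<beta> v = a" and ab: "a \<noteq> b" and b: "1 \<le> b" "b \<le> J v"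
    and sl: "slin Psi" and loc: "\<forall>x x'. (\<forall>l<N. x l = x' l) \<longrightarrow> Psi x = Psi x'"
    and vals: "\<forall>u\<in>VJ m J. Psi (Lam u) = (if u = (v,a) then -1 else if u = (v,b) then 1 else 0)"
    and pr: "proj_rep N Lam (sigmaJ m J \<beta>) n (\<lambda>i. (i, \<beta> i)) {1..m} \<mu>"
    and pr': "proj_rep N Lam (sigmaJ m J (\<beta>(v := b))) n (\<lambda>i. (i, (\<beta>(v := b)) i)) {1..m} \<mu>'"
  shows "DJ_equiv n {1..m} \<mu> \<mu>'"
proof -
  define \<beta>' where "\<beta>' = \<beta>(v := b)"
  define S where "S = sigmaJ m J \<beta>"
  define S' where "S' = sigmaJ m J \<beta>'"
  have a: "1 \<le> a" "a \<le> J v" using \<beta> v \<beta>v unfolding IJ_def by auto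
  have vaV: "(v,a) \<in> VJ m J" and vbV: "(v,b) \<in> VJ m J" using a b v VJ_mem by blast+
  have finS: "finite S" "finite S'" unfolding S_def S'_def by (rule sigma_fin)+
  have vbS: "(v,b) \<in> S" unfolding S_def using sigma_mem vbV \<beta>v ab by blast
  have vaS: "(v,a) \<notin> S" unfolding S_def using sigma_mem \<beta>v by blast
  have vaS': "(v,a) \<in> S'" unfolding S'_def \<beta>'_def using sigma_mem vaV ab by fastforce
  have vbS': "(v,b) \<notin> S'" unfolding S'_def \<beta>'_def using sigma_mem by fastforce
  have S'eq: "S' = insert (v,a) (S - {(v,b)})"
  proof (rule set_eqI)
    fix u :: "nat \<times> nat" obtain i k where u: "u = (i,k)" by (cases u) blast
    show "u \<in> S' \<longleftrightarrow> u \<in> insert (v,a) (S - {(v,b)})"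
      unfolding u S'_def S_def \<beta>'_def using sigma_mem[of i k m J] vaV \<beta>v ab
      by (cases "i = v") auto
  qed
  have Seq: "S = insert (v,b) (S' - {(v,a)})" using S'eq vbS vaS ab by auto
  obtain P where surjP: "\<forall>y. \<exists>x. \<forall>k<n. matvec N P x k = y k"
    and kerP: "\<forall>x. (\<forall>k<n. matvec N P x k = 0) \<longleftrightarrow> (\<exists>c. \<forall>l<N. x l = (\<Sum>u\<in>S. c u * Lam u l))"
    and repP: "\<forall>i\<in>{1..m}. \<forall>k<n. \<mu> i k = matvec N P (Lam (i, \<beta> i)) k"
    using pr unfolding proj_rep_def S_def by blast
  obtain P' where surjP': "\<forall>y. \<exists>x. \<forall>k<n. matvec N P' x k = y k"
    and kerP': "\<forall>x. (\<forall>k<n. matvec N P' x k = 0) \<longleftrightarrow> (\<exists>c. \<forall>l<N. x l = (\<Sum>u\<in>S'. c u * Lam u l))"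
    and repP': "\<forall>i\<in>{1..m}. \<forall>k<n. \<mu>' i k = matvec N P' (Lam (i, \<beta>' i)) k"
    using pr' unfolding proj_rep_def S'_def \<beta>'_def by blast
  define T where "T x = (\<lambda>l. x l + Psi x * (Lam (v,a) l - Lam (v,b) l))" for x
  have linT: "lin T" unfolding T_def by (rule lin_T[OF sl])
  have Pa: "Psi (Lam (v,a)) = -1" and Pb: "Psi (Lam (v,b)) = 1" using vals vaV vbV ab by auto
  have PsiT: "Psi (T x) = - Psi x" for x
  proof -
    have "Psi (T x) = Psi x + Psi (\<lambda>l. Psi x * (\<lambda>l. Lam (v,a) l - Lam (v,b) l) l)"
      unfolding T_def by (rule slin_add[OF sl])
    also have "\<dots> = Psi x + Psi x * (Psi (Lam (v,a)) - Psi (Lam (v,b)))"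
      by (simp only: slin_mul[OF sl] slin_diff[OF sl])
    finally show ?thesis using Pa Pb by (simp add: algebra_simps)
  qed
  have TT: "T (T x) = x" for x
    unfolding T_def[of "T x"] PsiT by (rule ext) (simp add: T_def algebra_simps)
  have T': "(\<lambda>l. y l + (- Psi y) * (Lam (v,b) l - Lam (v,a) l)) = T y" for y
    unfolding T_def by (rule ext) (simp add: algebra_simps)
  have locN: "\<And>x x'. (\<forall>l<N. x l = x' l) \<Longrightarrow> Psi x = Psi x'" using loc by blast
  have slneg: "slin (\<lambda>x. - Psi x)" using sl unfolding slin_def by (simp add: algebra_simps)
  have fw: "spn N Lam S' (T x)" if "spn N Lam S x" for x
  proof -
    have "spn N Lam (insert (v,a) (S - {(v,b)})) (\<lambda>l. x l + Psi x * (Lam (v,a) l - Lam (v,b) l))"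
    proof (rule swap_span[OF finS(1) vbS vaS sl locN Pa Pb _ that])
      show "\<forall>u\<in>S - {(v,b)}. Psi (Lam u) = 0"
        using vals vaS unfolding S_def sigmaJ_def by auto
    qed
    then show ?thesis unfolding S'eq T_def .
  qed
  have bw: "spn N Lam S x" if "spn N Lam S' (T x)" for x
  proof -
    have "spn N Lam (insert (v,b) (S' - {(v,a)})) (\<lambda>l. T x l + (- Psi (T x)) * (Lam (v,b) l - Lam (v,a) l))"
    proof (rule swap_span[OF finS(2) vaS' vbS' slneg])
      show "\<And>x x'. (\<forall>l<N. x l = x' l) \<Longrightarrow> - Psi x = - Psi x'" using locN by metis
      show "- Psi (Lam (v,b)) = -1" "- Psi (Lam (v,a)) = 1" using Pa Pb by simp_all
      show "\<forall>u\<in>S' - {(v,a)}. - Psi (Lam u) = 0"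
        using vals vbS' unfolding S'_def sigmaJ_def by auto
      show "spn N Lam S' (T x)" by (rule that)
    qed
    then show ?thesis unfolding T' TT Seq[symmetric] .
  qed
  define f where "f = matvec N P"
  define g where "g x = matvec N P' (T x)" for x
  have lf: "lin f" unfolding f_def by (rule matvec_lin)
  have lg: "lin g" unfolding g_def by (rule lin_comp[OF matvec_lin linT])
  have sf: "\<forall>y. \<exists>x. \<forall>k<n. f x k = y k" unfolding f_def by (rule surjP)
  have sg: "\<forall>y. \<exists>x. \<forall>k<n. g x k = y k"
  proof
    fix y obtain x where "\<forall>k<n. matvec N P' x k = y k" using surjP' by blast
    then have "\<forall>k<n. g (T x) k = y k" unfolding g_def TT .
    then show "\<exists>x. \<forall>k<n. g x k = y k" by blast
  qed
  have ker: "(\<forall>k<n. f x k = 0) \<longleftrightarrow> (\<forall>k<n. g x k = 0)" for x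
  proof -
    have "(\<forall>k<n. f x k = 0) \<longleftrightarrow> spn N Lam S x" unfolding f_def spn_def using kerP by blast
    also have "\<dots> \<longleftrightarrow> spn N Lam S' (T x)" using fw bw by blast
    also have "\<dots> \<longleftrightarrow> (\<forall>k<n. g x k = 0)" unfolding g_def spn_def using kerP' by blast
    finally show ?thesis .
  qed
  obtain A B where AB: "\<forall>k<n. \<forall>l<n. (\<Sum>i<n. A k i * B i l) = (if k = l then 1 else 0)"
      "\<forall>k<n. \<forall>l<n. (\<Sum>i<n. B k i * A i l) = (if k = l then 1 else 0)"
    and gA: "\<forall>x. \<forall>k<n. g x k = matvec n A (f x) k"
    using same_kernel_DJ[OF lf lg sf sg ker] by blast
  have TL: "T (Lam (i, \<beta> i)) = Lam (i, \<beta>' i)" if i: "i \<in> {1..m}" for i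
  proof (cases "i = v")
    case True
    then show ?thesis unfolding T_def \<beta>'_def using Pa \<beta>v by (auto intro!: ext)
  next
    case False
    have "(i, \<beta> i) \<in> VJ m J" using \<beta> i VJ_mem unfolding IJ_def by blast
    then have "Psi (Lam (i, \<beta> i)) = 0" using vals False by auto
    then show ?thesis unfolding T_def \<beta>'_def using False by simp
  qed
  show ?thesis unfolding DJ_equiv_def
  proof (rule exI[of _ A], rule exI[of _ B], intro conjI AB ballI allI impI)
    fix i k assume i: "i \<in> {1..m}" and k: "k < n"
    have "\<mu>' i k = g (Lam (i, \<beta> i)) k" unfolding g_def TL[OF i] using repP' i k by simp
    also have "\<dots> = matvec n A (f (Lam (i, \<beta> i))) k" using gA k by blast
    also have "\<dots> = matvec n A (\<mu> i) k"
      using repP i unfolding f_def by (intro matvec_loc_n[OF _ k]) auto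
    finally show "\<mu>' i k = matvec n A (\<mu> i) k" .
  qed
qed



lemma purity:
  fixes K :: "nat set set"
  assumes ss: "star_shaped_sphere TYPE('a::euclidean_space) n m K" and v: "v \<in> {1..m}"
  shows "\<exists>F\<in>K. v \<in> F \<and> card F = n"
proof (rule ccontr)
  assume nf: "\<not> ?thesis"
  from ss have sc: "simplicial_complex_on m K" and le: "\<forall>\<sigma>\<in>K. card \<sigma> \<le> n"
    and ex: "\<exists>\<sigma>\<in>K. card \<sigma> = n" and dim: "DIM('a) = n"
    and "\<exists>pos::nat\<Rightarrow>'a. geom_realization K pos \<and> (\<exists>x0. \<forall>u. u\<noteq>0 \<longrightarrow> (\<exists>!t::real. t\<ge>0 \<and> x0 + t *\<^sub>R u \<in> polyhedron K pos))"
    unfolding star_shaped_sphere_def by auto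
  then obtain pos :: "nat\<Rightarrow>'a" and x0 where gr: "geom_realization K pos"
    and ray: "\<And>u. u\<noteq>0 \<Longrightarrow> (\<exists>!t::real. t\<ge>0 \<and> x0 + t *\<^sub>R u \<in> polyhedron K pos)"
    by blast
  have KP: "K \<subseteq> Pow {1..m}" using sc unfolding simplicial_complex_on_def by blast
  have Kfin: "finite K" using KP by (meson finite_Pow_iff finite_atLeastAtMost finite_subset)
  have sfin: "\<And>\<sigma>. \<sigma>\<in>K \<Longrightarrow> finite \<sigma>" using KP by (meson PowD finite_atLeastAtMost finite_subset subsetD)
  have vK: "{v} \<in> K" using sc v unfolding simplicial_complex_on_def by blast
  have lt: "\<And>\<sigma>. \<sigma>\<in>K \<Longrightarrow> v\<in>\<sigma> \<Longrightarrow> card \<sigma> < n" using nf le by (meson order_le_less)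
  from lt[OF vK] have n2: "2 \<le> n" by simp
  define X where "X = polyhedron K pos"
  have Xeq: "X = (\<Union>\<sigma>\<in>K. convex hull (pos`\<sigma>))" unfolding X_def polyhedron_def by simp
  have compX: "compact X" unfolding Xeq using Kfin sfin
    by (intro compact_UN) (auto intro!: compact_convex_hull[OF finite_imp_compact])
  have wX: "pos v \<in> X" unfolding Xeq using vK by (auto intro!: bexI[of _ "{v}"] hull_inc)
  have x0X: "x0 \<notin> X"
  proof
    assume x0: "x0 \<in> X"
    obtain \<sigma> where \<sigma>K: "\<sigma>\<in>K" and c\<sigma>: "card \<sigma> = n" using ex by blast
    have f\<sigma>: "finite \<sigma>" using sfin \<sigma>K by blast
    obtain i where i: "i \<in> \<sigma>" using c\<sigma> n2 by (metis all_not_in_conv card.empty not_numeral_le_zero)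
    have "card (\<sigma> - {i}) \<ge> 1" using c\<sigma> n2 i f\<sigma> by simp
    then obtain j where j: "j \<in> \<sigma> - {i}" by (metis all_not_in_conv card.empty not_one_le_zero)
    have ij: "i\<in>\<sigma>" "j\<in>\<sigma>" "i\<noteq>j" using i j by auto
    have "inj_on pos \<sigma>" using gr \<sigma>K unfolding geom_realization_def by blast
    then have "pos i \<noteq> pos j" using ij by (meson inj_onD)
    then obtain q where q: "q \<in> {pos i, pos j}" "q \<noteq> x0" by blast
    have qX: "q \<in> X" unfolding Xeq using q ij \<sigma>K by (auto intro: hull_inc)
    have "q - x0 \<noteq> 0" using q by simp
    from ray[OF this] have u: "\<exists>!t::real. t\<ge>0 \<and> x0 + t *\<^sub>R (q - x0) \<in> X" unfolding X_def .
    have "x0 + 0 *\<^sub>R (q - x0) \<in> X" "x0 + 1 *\<^sub>R (q - x0) \<in> X" using x0 qX by auto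
    with u show False by (metis zero_less_one order_refl less_irrefl zero_le_one)
  qed
  define Y where "Y = (\<Union>\<sigma>\<in>{\<sigma>\<in>K. v\<notin>\<sigma>}. convex hull (pos`\<sigma>))"
  have closedY: "closed Y" unfolding Y_def using Kfin sfin
    by (intro compact_imp_closed compact_UN) (auto intro!: compact_convex_hull[OF finite_imp_compact])
  have wY: "pos v \<notin> Y"
  proof
    assume "pos v \<in> Y"
    then obtain \<sigma> where \<sigma>: "\<sigma>\<in>K" "v\<notin>\<sigma>" "pos v \<in> convex hull (pos`\<sigma>)" unfolding Y_def by blast
    have "convex hull (pos`\<sigma>) \<inter> convex hull (pos`{v}) = convex hull (pos`(\<sigma> \<inter> {v}))"
      using gr \<sigma>(1) vK unfolding geom_realization_def by blast
    moreover have "\<sigma> \<inter> {v} = {}" using \<sigma> by blast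
    ultimately show False using \<sigma>(3) by (simp add: hull_inc)
  qed
  obtain e where e: "e > 0" "ball (pos v) e \<subseteq> - Y"
    using closedY wY by (metis ComplI open_Compl open_contains_ball)
  define X' where "X' = X \<inter> - ball (pos v) e"
  have compX': "compact X'" unfolding X'_def using compX by (intro compact_Int_closed) auto
  define d where "d q = (q - x0) /\<^sub>R norm (q - x0)" for q
  have "continuous_on X' d" unfolding d_def using x0X X'_def
    by (intro continuous_intros) auto
  then have "compact (d ` X')" using compX' by (rule compact_continuous_image)
  then have closedD: "closed (d ` X')" by (rule compact_imp_closed)
  have wx0: "pos v \<noteq> x0" using wX x0X by auto
  have dw: "d (pos v) \<notin> d ` X'"
  proof
    assume "d (pos v) \<in> d ` X'"
    then obtain q where qX': "q \<in> X'" and dq: "d q = d (pos v)" by (metis imageE)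
    have qx0: "q \<noteq> x0" using qX' x0X X'_def by auto
    have nq: "norm (q - x0) > 0" "norm (pos v - x0) > 0" using qx0 wx0 by auto
    define t where "t = norm (q - x0) / norm (pos v - x0)"
    have t0: "t \<ge> 0" unfolding t_def using nq by simp
    have "q - x0 = norm (q - x0) *\<^sub>R d q" unfolding d_def using nq by simp
    also have "\<dots> = norm (q - x0) *\<^sub>R ((pos v - x0) /\<^sub>R norm (pos v - x0))" using dq d_def by simp
    also have "\<dots> = t *\<^sub>R (pos v - x0)" unfolding t_def by (simp add: divide_inverse_commute)
    finally have qeq: "x0 + t *\<^sub>R (pos v - x0) = q" by (simp add: algebra_simps)
    have "pos v - x0 \<noteq> 0" using wx0 by simp
    from ray[OF this] have u: "\<exists>!t::real. t\<ge>0 \<and> x0 + t *\<^sub>R (pos v - x0) \<in> X" unfolding X_def .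
    have "x0 + 1 *\<^sub>R (pos v - x0) \<in> X" using wX by simp
    moreover have "x0 + t *\<^sub>R (pos v - x0) \<in> X" using qeq qX' X'_def by simp
    ultimately have "t = 1" using u t0 by (metis zero_le_one)
    then have "q = pos v" using qeq by simp
    then show False using qX' X'_def e(1) by simp
  qed
  obtain \<eta> where \<eta>: "\<eta> > 0" "ball (d (pos v)) \<eta> \<subseteq> - (d ` X')"
    using closedD dw by (metis ComplI open_Compl open_contains_ball)
  have "continuous (at (pos v)) d" unfolding d_def using wx0 by (intro continuous_intros) auto
  then obtain \<delta>0 where \<delta>0: "\<delta>0 > 0" "\<And>z. dist z (pos v) < \<delta>0 \<Longrightarrow> dist (d z) (d (pos v)) < \<eta>"
    unfolding continuous_at_eps_delta using \<eta>(1) by blast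
  define \<delta> where "\<delta> = min \<delta>0 (norm (pos v - x0))"
  have \<delta>pos: "\<delta> > 0" unfolding \<delta>_def using \<delta>0 wx0 by simp
  define H where "H = (\<lambda>\<sigma>. affine hull (insert x0 (pos ` \<sigma>))) ` {\<sigma>\<in>K. v\<in>\<sigma>}"
  have sub: "ball (pos v) \<delta> \<subseteq> \<Union>H"
  proof
    fix z assume z: "z \<in> ball (pos v) \<delta>"
    then have dz: "dist z (pos v) < \<delta>0" "dist z (pos v) < norm (pos v - x0)"
      unfolding \<delta>_def by (auto simp: dist_commute)
    have zx0: "z \<noteq> x0" using dz(2) by (auto simp: dist_norm norm_minus_commute)
    then have "z - x0 \<noteq> 0" by simp
    from ray[OF this] obtain t where t: "t \<ge> 0" "x0 + t *\<^sub>R (z - x0) \<in> X" unfolding X_def by blast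
    define q where "q = x0 + t *\<^sub>R (z - x0)"
    have qX: "q \<in> X" using t q_def by simp
    have tpos: "t > 0" using t x0X by (cases "t = 0") auto
    have nz: "norm (z - x0) > 0" using zx0 by simp
    have "d q = d z" unfolding d_def q_def using tpos nz by simp
    then have "d q \<in> ball (d (pos v)) \<eta>" using \<delta>0(2)[OF dz(1)] by (simp add: dist_commute)
    then have "q \<notin> X'" using \<eta>(2) by blast
    then have "q \<in> ball (pos v) e" using qX X'_def by blast
    then have qY: "q \<notin> Y" using e(2) by blast
    from qX obtain \<sigma> where \<sigma>: "\<sigma> \<in> K" "q \<in> convex hull (pos`\<sigma>)" unfolding Xeq by blast
    have v\<sigma>: "v \<in> \<sigma>" using \<sigma> qY unfolding Y_def by blast
    define A where "A = affine hull (insert x0 (pos ` \<sigma>))"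
    have qA: "q \<in> A" unfolding A_def using \<sigma>(2)
      by (meson convex_hull_subset_affine_hull hull_mono subset_insertI subsetD)
    have x0A: "x0 \<in> A" unfolding A_def by (simp add: hull_inc)
    have "z = (1 - 1/t) *\<^sub>R x0 + (1/t) *\<^sub>R q" unfolding q_def using tpos
      by (simp add: algebra_simps)
    also have "\<dots> \<in> A" using qA x0A unfolding A_def
      by (intro mem_affine) (auto simp: affine_affine_hull)
    finally have "z \<in> A" .
    then show "z \<in> \<Union>H" unfolding H_def A_def using \<sigma>(1) v\<sigma> by blast
  qed
  have "negligible (\<Union>H)"
  proof (rule negligible_Union)
    show "finite H" unfolding H_def using Kfin by simp
  next
    fix T assume "T \<in> H"
    then obtain \<sigma> where \<sigma>: "\<sigma>\<in>K" "v\<in>\<sigma>" and T: "T = affine hull (insert x0 (pos ` \<sigma>))"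
      unfolding H_def by blast
    have "card (insert x0 (pos ` \<sigma>)) \<le> Suc (card (pos ` \<sigma>))" by (simp add: card_insert_le_m1)
    also have "\<dots> \<le> Suc (card \<sigma>)" using card_image_le sfin[OF \<sigma>(1)] by simp
    also have "\<dots> \<le> DIM('a)" using lt[OF \<sigma>] dim by simp
    finally have "interior T = {}" unfolding T using sfin[OF \<sigma>(1)]
      by (intro empty_interior_affine_hull) auto
    then show "negligible T" unfolding T by (simp add: negligible_convex_interior convex_affine_hull)
  qed
  then have "negligible (ball (pos v) \<delta>)" using sub by (rule negligible_subset)
  then show False using open_not_negligible[of "ball (pos v) \<delta>"] \<delta>pos by simp
qed


theorem mainTheorem7:
  fixes n m :: nat and K :: "nat set set" and J :: "nat \<Rightarrow> nat"
    and p :: "(nat \<Rightarrow> nat) \<Rightarrow> nat \<Rightarrow> nat \<Rightarrow> 'r::comm_ring_1"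
    and \<alpha> \<alpha>' :: "nat \<Rightarrow> nat" and v a b :: nat
  assumes "ring_Z_or_Z2 TYPE('r)"
    and "star_shaped_sphere TYPE('a::euclidean_space) n m K"
    and "\<forall>i\<in>{1..m}. 0 < J i"
    and "realizable_puzzle n m K J p"
    and "v \<in> {1..m}"
    and "\<alpha> \<in> IJ m J" and "\<alpha>' \<in> IJ m J"
    and "\<alpha> v = a" and "\<alpha>' v = b" and "a \<noteq> b"
    and "\<forall>i. i \<noteq> v \<longrightarrow> \<alpha> i = \<alpha>' i"
    and "DJ_equiv n {1..m} (p \<alpha>) (p \<alpha>')"
  shows "\<forall>\<beta>\<in>IJ m J. \<beta> v = a \<longrightarrow> DJ_equiv n {1..m} (p \<beta>) (p (\<beta>(v := b)))"
proof -
  define N where "N = NJ n m J"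
  have pz: "puzzle n m K J p" using assms(4) unfolding realizable_puzzle_def by blast
  obtain Lam :: "nat \<times> nat \<Rightarrow> nat \<Rightarrow> 'r" where
    prj: "\<forall>\<alpha>\<in>IJ m J. proj_rep N Lam (sigmaJ m J \<alpha>) n (\<lambda>i. (i, \<alpha> i)) {1..m} (p \<alpha>)"
    using assms(4) unfolding realizable_puzzle_def N_def by blast
  have cm: "char_map n K (p \<alpha>')" using pz assms(7) unfolding puzzle_def by blast
  obtain F where F: "F \<in> K" "v \<in> F" "card F = n" using purity[OF assms(2,5)] by blast
  have "DIM('a) = n" using assms(2) unfolding star_shaped_sphere_def by blast
  then have "n > 0" by (metis DIM_positive)
  then have finF: "finite F" using F(3) card_ge_0_finite by blast
  have basis: "is_R_basis n F (p \<alpha>')" using cm F unfolding char_map_def by blast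
  obtain \<phi> where \<phi>: "slin \<phi>" "\<forall>x x'. (\<forall>k<n. x k = x' k) \<longrightarrow> \<phi> x = \<phi> x'" "\<phi> (p \<alpha>' v) = 1"
    using coord_fun[OF basis finF F(2)] by blast
  obtain A B where DJ: "\<forall>i\<in>{1..m}. \<forall>k<n. p \<alpha>' i k = matvec n A (p \<alpha> i) k"
    using assms(12) unfolding DJ_equiv_def by blast
  obtain P where kerP: "\<forall>x. (\<forall>k<n. matvec N P x k = 0) \<longleftrightarrow> (\<exists>c. \<forall>l<N. x l = (\<Sum>w\<in>sigmaJ m J \<alpha>. c w * Lam w l))"
    and repP: "\<forall>i\<in>{1..m}. \<forall>k<n. p \<alpha> i k = matvec N P (Lam (i, \<alpha> i)) k"
    using prj[rule_format, OF assms(6)] unfolding proj_rep_def by blast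
  obtain P' where kerP': "\<forall>x. (\<forall>k<n. matvec N P' x k = 0) \<longleftrightarrow> (\<exists>c. \<forall>l<N. x l = (\<Sum>w\<in>sigmaJ m J \<alpha>'. c w * Lam w l))"
    and repP': "\<forall>i\<in>{1..m}. \<forall>k<n. p \<alpha>' i k = matvec N P' (Lam (i, \<alpha>' i)) k"
    using prj[rule_format, OF assms(7)] unfolding proj_rep_def by blast
  obtain Psi where Psi: "slin Psi" "\<forall>x x'. (\<forall>l<N. x l = x' l) \<longrightarrow> Psi x = Psi x'"
     "\<forall>u\<in>VJ m J. Psi (Lam u) = (if u = (v,a) then -1 else if u = (v,b) then 1 else 0)"
    using make_Psi[OF assms(5,8,9,10,11) DJ kerP repP kerP' repP' \<phi>] by blast
  have b: "1 \<le> b" "b \<le> J v" using assms(5,7,9) unfolding IJ_def by auto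
  show ?thesis
  proof (intro ballI impI)
    fix \<beta> assume \<beta>: "\<beta> \<in> IJ m J" and \<beta>v: "\<beta> v = a"
    have \<beta>': "\<beta>(v := b) \<in> IJ m J" using \<beta> b assms(5) unfolding IJ_def by auto
    show "DJ_equiv n {1..m} (p \<beta>) (p (\<beta>(v := b)))"
      by (rule dir2[OF assms(5) \<beta> \<beta>v assms(10) b Psi]) (rule prj[rule_format, OF \<beta>], rule prj[rule_format, OF \<beta>'])
  qed
qed

end
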